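(* Let $F\leq F'\leq\hat F$ be permutation groups on $\Omega$. The closure of $G(F,F')$ in the topological group $\mathrm{Aut}(\mathcal{T}_d)$ (permutation topology) is $U(F')$. In particular, $G(F)$ is dense in $\mathrm{Aut}(\mathcal{T}_d)$ if and only if $F$ is transitive on $\Omega$.
   Context: Standing notation. $\Omega$ is a finite set with $d=|\Omega|\geq 3$, $\mathcal{T}_d$ is the $d$-regular tree with vertex set $V$ and set $E$ of non-oriented edges, and $\mathrm{Aut}(\mathcal{T}_d)$ carries the permutation topology (basis of identity neighbourhoods: pointwise stabilizers of finite vertex sets). Fix a coloring $c:E\to\Omega$ such that for every vertex $v$ its restriction $c_v$ to the set $E(v)$ of edges containing $v$ is a bijection onto $\Omega$. For $g\in\mathrm{Aut}(\mathcal{T}_d)$ and $v\in V$, the local permutation is $\sigma(g,v)=c_{gv}\circ g_v\circ c_v^{-1}\in\mathrm{Sym}(\Omega)$, where $g_v:E(v)\to E(gv)$ is induced by $g$. For $F\leq\mathrm{Sym}(\Omega)$: $U(F)=\{g:\sigma(g,v)\in F \ \forall v\}$; $G(F)=\{g:\sigma(g,v)\in F \text{ for all but finitely many } v\}$; $\hat F$ is the subgroup of permutations preserving each $F$-orbit. For $F\leq F'\leq\hat F$, $G(F,F')=G(F)\cap U(F')$. *)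

theory Defs
  imports "HOL-Analysis.Abstract_Topology" "HOL-Algebra.Bij"
begin

text \<open>The tree is given by a vertex type 'v and a symmetric irreflexive adjacency
relation adj; the (non-oriented) edge colouring is a function c with c u v = c v u
for adjacent u, v (the colour of the edge {u,v}).\<close>

definition reduced_walk :: "('v \<Rightarrow> 'v \<Rightarrow> bool) \<Rightarrow> 'v list \<Rightarrow> bool" where
  "reduced_walk adj xs \<longleftrightarrow>
     (\<forall>i. Suc i < length xs \<longrightarrow> adj (xs ! i) (xs ! Suc i)) \<and>
     (\<forall>i. Suc (Suc i) < length xs \<longrightarrow> xs ! i \<noteq> xs ! Suc (Suc i))"

definition is_tree :: "('v \<Rightarrow> 'v \<Rightarrow> bool) \<Rightarrow> bool" where
  "is_tree adj \<longleftrightarrow>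
     (\<forall>u v. adj u v \<longrightarrow> adj v u) \<and> (\<forall>v. \<not> adj v v) \<and>
     (\<forall>u v. adj\<^sup>*\<^sup>* u v) \<and>
     (\<not> (\<exists>xs. reduced_walk adj xs \<and> length xs \<ge> 2 \<and> hd xs = last xs))"

definition colored_regular_tree ::
  "'c set \<Rightarrow> nat \<Rightarrow> ('v \<Rightarrow> 'v \<Rightarrow> bool) \<Rightarrow> ('v \<Rightarrow> 'v \<Rightarrow> 'c) \<Rightarrow> bool" where
  "colored_regular_tree \<Omega> d adj c \<longleftrightarrow>
     finite \<Omega> \<and> card \<Omega> = d \<and> is_tree adj \<and>
     (\<forall>v. finite {w. adj v w} \<and> card {w. adj v w} = d) \<and>
     (\<forall>u v. adj u v \<longrightarrow> c u v = c v u) \<and>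
     (\<forall>v. bij_betw (c v) {w. adj v w} \<Omega>)"

definition Aut :: "('v \<Rightarrow> 'v \<Rightarrow> bool) \<Rightarrow> ('v \<Rightarrow> 'v) set" where
  "Aut adj = {g. bij g \<and> (\<forall>u v. adj u v \<longleftrightarrow> adj (g u) (g v))}"

text \<open>Permutation topology: the identity neighbourhoods have as basis the pointwise
stabilisers of finite vertex sets; hence the basic neighbourhoods of g are the cosets
{h. h agrees with g on S}, S finite.\<close>
definition perm_open :: "('v \<Rightarrow> 'v \<Rightarrow> bool) \<Rightarrow> ('v \<Rightarrow> 'v) set \<Rightarrow> bool" where
  "perm_open adj U \<longleftrightarrow> U \<subseteq> Aut adj \<and>
     (\<forall>g\<in>U. \<exists>S. finite S \<and> {h \<in> Aut adj. \<forall>x\<in>S. h x = g x} \<subseteq> U)"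

lemma istopology_perm_open: "istopology (perm_open adj)"
  unfolding istopology_def
proof safe
  fix S T assume S: "perm_open adj S" and T: "perm_open adj T"
  show "perm_open adj (S \<inter> T)"
    unfolding perm_open_def
  proof safe
    fix x assume "x \<in> S" "x \<in> T"
    then show "x \<in> Aut adj" using S unfolding perm_open_def by blast
  next
    fix g assume g: "g \<in> S" "g \<in> T"
    obtain A where A: "finite A" "{h \<in> Aut adj. \<forall>x\<in>A. h x = g x} \<subseteq> S"
      using S g unfolding perm_open_def by blast
    obtain B where B: "finite B" "{h \<in> Aut adj. \<forall>x\<in>B. h x = g x} \<subseteq> T"
      using T g unfolding perm_open_def by blast
    show "\<exists>C. finite C \<and> {h \<in> Aut adj. \<forall>x\<in>C. h x = g x} \<subseteq> S \<inter> T"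
      by (rule exI[of _ "A \<union> B"]) (use A B in auto)
  qed
next
  fix K assume K: "\<forall>U\<in>K. perm_open adj U"
  show "perm_open adj (\<Union>K)"
    unfolding perm_open_def
  proof safe
    fix x U assume "x \<in> U" "U \<in> K"
    then show "x \<in> Aut adj" using K unfolding perm_open_def by blast
  next
    fix g U assume g: "g \<in> U" "U \<in> K"
    then obtain A where "finite A" "{h \<in> Aut adj. \<forall>x\<in>A. h x = g x} \<subseteq> U"
      using K unfolding perm_open_def by blast
    then show "\<exists>S. finite S \<and> {h \<in> Aut adj. \<forall>x\<in>S. h x = g x} \<subseteq> \<Union>K"
      using g by blast
  qed
qed

definition perm_topology :: "('v \<Rightarrow> 'v \<Rightarrow> bool) \<Rightarrow> ('v \<Rightarrow> 'v) topology" where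
  "perm_topology adj = topology (perm_open adj)"

definition nbr :: "('v \<Rightarrow> 'v \<Rightarrow> bool) \<Rightarrow> ('v \<Rightarrow> 'v \<Rightarrow> 'c) \<Rightarrow> 'v \<Rightarrow> 'c \<Rightarrow> 'v" where
  "nbr adj c v a = (THE w. adj v w \<and> c v w = a)"

text \<open>sigma(g,v) = c_{gv} o g_v o c_v^{-1}, as an (extensional) permutation of Omega.\<close>
definition local_perm ::
  "'c set \<Rightarrow> ('v \<Rightarrow> 'v \<Rightarrow> bool) \<Rightarrow> ('v \<Rightarrow> 'v \<Rightarrow> 'c) \<Rightarrow> ('v \<Rightarrow> 'v) \<Rightarrow> 'v \<Rightarrow> ('c \<Rightarrow> 'c)" where
  "local_perm \<Omega> adj c g v = (\<lambda>a\<in>\<Omega>. c (g v) (g (nbr adj c v a)))"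

definition U_grp ::
  "'c set \<Rightarrow> ('v \<Rightarrow> 'v \<Rightarrow> bool) \<Rightarrow> ('v \<Rightarrow> 'v \<Rightarrow> 'c) \<Rightarrow> ('c \<Rightarrow> 'c) set \<Rightarrow> ('v \<Rightarrow> 'v) set" where
  "U_grp \<Omega> adj c F = {g \<in> Aut adj. \<forall>v. local_perm \<Omega> adj c g v \<in> F}"

definition G_grp ::
  "'c set \<Rightarrow> ('v \<Rightarrow> 'v \<Rightarrow> bool) \<Rightarrow> ('v \<Rightarrow> 'v \<Rightarrow> 'c) \<Rightarrow> ('c \<Rightarrow> 'c) set \<Rightarrow> ('v \<Rightarrow> 'v) set" where
  "G_grp \<Omega> adj c F = {g \<in> Aut adj. finite {v. local_perm \<Omega> adj c g v \<notin> F}}"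

definition G2_grp ::
  "'c set \<Rightarrow> ('v \<Rightarrow> 'v \<Rightarrow> bool) \<Rightarrow> ('v \<Rightarrow> 'v \<Rightarrow> 'c) \<Rightarrow> ('c \<Rightarrow> 'c) set \<Rightarrow> ('c \<Rightarrow> 'c) set \<Rightarrow> ('v \<Rightarrow> 'v) set" where
  "G2_grp \<Omega> adj c F F' = G_grp \<Omega> adj c F \<inter> U_grp \<Omega> adj c F'"

definition orbits :: "'c set \<Rightarrow> ('c \<Rightarrow> 'c) set \<Rightarrow> 'c set set" where
  "orbits \<Omega> F = {{f a | f. f \<in> F} | a. a \<in> \<Omega>}"

definition hat :: "'c set \<Rightarrow> ('c \<Rightarrow> 'c) set \<Rightarrow> ('c \<Rightarrow> 'c) set" where
  "hat \<Omega> F = {p \<in> Bij \<Omega>. \<forall>Orb \<in> orbits \<Omega> F. p ` Orb = Orb}"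

definition transitive_on :: "'c set \<Rightarrow> ('c \<Rightarrow> 'c) set \<Rightarrow> bool" where
  "transitive_on \<Omega> F \<longleftrightarrow> (\<forall>a\<in>\<Omega>. \<forall>b\<in>\<Omega>. \<exists>f\<in>F. f a = b)"

end

theory Submission imports Defs begin

lemma no_cycle_seq:
  fixes x :: "nat \<Rightarrow> 'v"
  assumes tree: "\<not> (\<exists>xs. reduced_walk adj xs \<and> length xs \<ge> 2 \<and> hd xs = last xs)"
    and a: "\<And>n. adj (x n) (x (Suc n))" and b: "\<And>n. x (Suc (Suc n)) \<noteq> x n"
    and f: "finite (range x)"
  shows False
proof -
  have "\<not> inj x" using f finite_imageD[of x UNIV] by auto
  then obtain i j where ij: "i \<noteq> j" "x i = x j" unfolding inj_def by blast
  then obtain i j where ij: "i < j" "x i = x j" by (metis linorder_neq_iff)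
  define L where "L = map (\<lambda>k. x (i + k)) [0..<Suc (j - i)]"
  have len: "length L = Suc (j - i)" by (simp add: L_def)
  have nth: "\<And>k. k < Suc (j - i) \<Longrightarrow> L ! k = x (i + k)" by (simp add: L_def del: upt_Suc)
  have "reduced_walk adj L"
    unfolding reduced_walk_def
  proof (intro conjI allI impI)
    fix k assume "Suc k < length L"
    then show "adj (L ! k) (L ! Suc k)" using a[of "i+k"] by (simp add: len nth)
  next
    fix k assume "Suc (Suc k) < length L"
    then show "L ! k \<noteq> L ! Suc (Suc k)" using b[of "i+k"] by (simp add: len nth)
  qed
  moreover have "length L \<ge> 2" using len ij by simp
  moreover have "hd L = last L"
    using ij by (simp add: L_def hd_map last_map)
  ultimately show False using tree by blast
qed

lemma openin_perm: "openin (perm_topology adj) = perm_open adj"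
  by (simp add: perm_topology_def istopology_perm_open)

lemma topspace_perm: "topspace (perm_topology adj) = Aut adj"
proof -
  have "perm_open adj (Aut adj)" unfolding perm_open_def by (auto intro: exI[of _ "{}"])
  then show ?thesis unfolding topspace_def openin_perm
  proof (intro equalityI subsetI)
    fix x assume "x \<in> \<Union> {S. perm_open adj S}" then show "x \<in> Aut adj" by (auto simp: perm_open_def)
  next
    fix x assume "x \<in> Aut adj" "perm_open adj (Aut adj)" then show "x \<in> \<Union> {S. perm_open adj S}" by blast
  qed
qed

lemma orb_facts:
  assumes sg: "subgroup F (BijGroup \<Omega>)"
  shows orb_sub: "\<And>f a. f \<in> F \<Longrightarrow> a \<in> \<Omega> \<Longrightarrow> f a \<in> \<Omega>"
    and orb_refl: "\<And>a. a \<in> \<Omega> \<Longrightarrow> \<exists>f\<in>F. f a = a"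
    and orb_sym: "\<And>f a. f \<in> F \<Longrightarrow> a \<in> \<Omega> \<Longrightarrow> \<exists>h\<in>F. h (f a) = a"
    and orb_trans: "\<And>f h a. f \<in> F \<Longrightarrow> h \<in> F \<Longrightarrow> a \<in> \<Omega> \<Longrightarrow> \<exists>k\<in>F. k a = h (f a)"
proof -
  have FB: "F \<subseteq> Bij \<Omega>" using subgroup.subset[OF sg] by (simp add: BijGroup_def)
  show sub: "\<And>f a. f \<in> F \<Longrightarrow> a \<in> \<Omega> \<Longrightarrow> f a \<in> \<Omega>"
    using FB by (auto simp: Bij_def dest: bij_betw_apply)
  show "\<And>a. a \<in> \<Omega> \<Longrightarrow> \<exists>f\<in>F. f a = a"
    using subgroup.one_closed[OF sg] by (intro bexI[of _ "\<lambda>x\<in>\<Omega>. x"]) (auto simp: BijGroup_def)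
  show "\<exists>h\<in>F. h (f a) = a" if f: "f \<in> F" and a: "a \<in> \<Omega>" for f a
  proof -
    have i1: "m_inv (BijGroup \<Omega>) f \<in> F" using subgroup.m_inv_closed[OF sg f] .
    have i2: "m_inv (BijGroup \<Omega>) f = (\<lambda>x\<in>\<Omega>. inv_into \<Omega> f x)" using f FB inv_BijGroup by blast
    have i3: "inv_into \<Omega> f (f a) = a" using f FB a by (auto simp: Bij_def bij_betw_def)
    have "m_inv (BijGroup \<Omega>) f (f a) = a" using i2 i3 sub[OF f a] by simp
    then show ?thesis using i1 by blast
  qed
  show "\<exists>k\<in>F. k a = h (f a)" if f: "f \<in> F" and h: "h \<in> F" and a: "a \<in> \<Omega>" for f h a
  proof -
    have "h \<otimes>\<^bsub>BijGroup \<Omega>\<^esub> f \<in> F" using subgroup.m_closed[OF sg h f] .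
    moreover have "h \<otimes>\<^bsub>BijGroup \<Omega>\<^esub> f = compose \<Omega> h f" using f h FB by (auto simp: BijGroup_def)
    ultimately have "(h \<otimes>\<^bsub>BijGroup \<Omega>\<^esub> f) \<in> F" "(h \<otimes>\<^bsub>BijGroup \<Omega>\<^esub> f) a = h (f a)"
      using a by (auto simp: compose_def)
    then show ?thesis by blast
  qed
qed

lemma orb_count:
  assumes sg: "subgroup F (BijGroup \<Omega>)" and fin: "finite \<Omega>" and \<sigma>: "\<sigma> \<in> Bij \<Omega>"
    and a0: "a0 \<in> \<Omega>" and bad: "\<not> (\<exists>f\<in>F. f a0 = \<sigma> a0)"
  shows "\<exists>a\<in>\<Omega>. a \<noteq> a0 \<and> \<not> (\<exists>f\<in>F. f a = \<sigma> a)"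
proof (rule ccontr)
  assume H: "\<not> ?thesis"
  have sO: "\<sigma> a \<in> \<Omega>" if "a \<in> \<Omega>" for a using \<sigma> that by (auto simp: Bij_def dest: bij_betw_apply)
  define Ob where "Ob = {b \<in> \<Omega>. \<exists>f\<in>F. f (\<sigma> a0) = b}"
  have fO: "finite Ob" using fin by (simp add: Ob_def)
  have nO: "a0 \<notin> Ob"
  proof
    assume "a0 \<in> Ob"
    then obtain f where f: "f \<in> F" "f (\<sigma> a0) = a0" by (auto simp: Ob_def)
    then obtain h where "h \<in> F" "h (f (\<sigma> a0)) = \<sigma> a0" using orb_sym[OF sg f(1) sO[OF a0]] by blast
    then show False using bad f by auto
  qed
  have img: "\<sigma> ` insert a0 Ob \<subseteq> Ob"
  proof
    fix y assume "y \<in> \<sigma> ` insert a0 Ob"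
    then obtain a where a: "a \<in> insert a0 Ob" "y = \<sigma> a" by blast
    show "y \<in> Ob"
    proof (cases "a = a0")
      case True then show ?thesis using a orb_refl[OF sg sO[OF a0]] sO[OF a0] by (auto simp: Ob_def)
    next
      case False
      then have aO: "a \<in> Ob" using a by auto
      then obtain f where f: "f \<in> F" "f (\<sigma> a0) = a" "a \<in> \<Omega>" by (auto simp: Ob_def)
      obtain f' where f': "f' \<in> F" "f' a = \<sigma> a" using H False f(3) by blast
      obtain k where "k \<in> F" "k (\<sigma> a0) = f' (f (\<sigma> a0))" using orb_trans[OF sg f(1) f'(1) sO[OF a0]] by blast
      then show ?thesis using f f' a sO by (auto simp: Ob_def)
    qed
  qed
  have "insert a0 Ob \<subseteq> \<Omega>" using a0 by (auto simp: Ob_def)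
  moreover have "inj_on \<sigma> \<Omega>" using \<sigma> by (auto simp: Bij_def bij_betw_def)
  ultimately have "inj_on \<sigma> (insert a0 Ob)" using inj_on_subset by blast
  then have "card (insert a0 Ob) \<le> card Ob" using card_inj_on_le img fO by blast
  then show False using nO fO by simp
qed

primrec pseq :: "('v \<Rightarrow> 'v \<Rightarrow> 'v) \<Rightarrow> 'v \<Rightarrow> 'v \<Rightarrow> nat \<Rightarrow> 'v \<times> 'v" where
  "pseq nx x0 y0 0 = (x0, y0)"
| "pseq nx x0 y0 (Suc n) = (snd (pseq nx x0 y0 n), nx (fst (pseq nx x0 y0 n)) (snd (pseq nx x0 y0 n)))"

locale crt =
  fixes \<Omega> :: "'c set" and d :: nat and adj :: "'v \<Rightarrow> 'v \<Rightarrow> bool" and c :: "'v \<Rightarrow> 'v \<Rightarrow> 'c"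
  assumes crt: "colored_regular_tree \<Omega> d adj c"
begin

abbreviation "nb \<equiv> nbr adj c"

lemma finO: "finite \<Omega>" using crt by (simp add: colored_regular_tree_def)
lemma sym_adj: "adj u v \<Longrightarrow> adj v u" using crt by (auto simp: colored_regular_tree_def is_tree_def)
lemma irrefl: "\<not> adj v v" using crt by (auto simp: colored_regular_tree_def is_tree_def)
lemma conn: "adj\<^sup>*\<^sup>* u v" using crt by (auto simp: colored_regular_tree_def is_tree_def)
lemma tree: "\<not> (\<exists>xs. reduced_walk adj xs \<and> length xs \<ge> 2 \<and> hd xs = last xs)"
  using crt by (auto simp: colored_regular_tree_def is_tree_def)
lemma csym: "adj u v \<Longrightarrow> c u v = c v u" using crt by (auto simp: colored_regular_tree_def)
lemma cbij: "bij_betw (c v) {w. adj v w} \<Omega>" using crt by (auto simp: colored_regular_tree_def)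

lemma cOm: "adj v w \<Longrightarrow> c v w \<in> \<Omega>"
  using cbij[of v] by (auto dest: bij_betw_apply)

lemma nbr_eq: assumes "adj v w" shows "nb v (c v w) = w"
proof -
  have "\<And>w'. adj v w' \<and> c v w' = c v w \<Longrightarrow> w' = w"
    using cbij[of v] assms unfolding bij_betw_def inj_on_def by auto
  then show ?thesis unfolding nbr_def using assms by (intro the_equality) auto
qed

lemma nb: "a \<in> \<Omega> \<Longrightarrow> adj v (nb v a) \<and> c v (nb v a) = a"
proof -
  assume a: "a \<in> \<Omega>"
  then obtain w where w: "adj v w" "c v w = a" using cbij[of v] unfolding bij_betw_def by force
  then show ?thesis using nbr_eq[OF w(1)] by simp
qed

lemma nb_back: "a \<in> \<Omega> \<Longrightarrow> nb (nb v a) a = v"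
  using nb[of a v] nbr_eq[of "nb v a" v] sym_adj csym by metis

lemma nb_inj: "a \<in> \<Omega> \<Longrightarrow> b \<in> \<Omega> \<Longrightarrow> nb v a = nb v b \<Longrightarrow> a = b"
  using nb by metis

lemma adj_nb: "adj v w \<longleftrightarrow> (\<exists>a\<in>\<Omega>. w = nb v a)"
  using nb nbr_eq cOm by metis

lemma succ_sym[simp]: "successively (\<lambda>x y. y \<noteq> x) xs = successively (\<noteq>) xs"
  by (auto simp: successively_conv_nth)

definition red :: "'c list \<Rightarrow> bool" where
  "red w \<longleftrightarrow> set w \<subseteq> \<Omega> \<and> successively (\<noteq>) w"

definition walk :: "'v \<Rightarrow> 'c list \<Rightarrow> 'v" where
  "walk r w = foldl nb r w"

lemma walk_Nil[simp]: "walk r [] = r" by (simp add: walk_def)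
lemma walk_Cons[simp]: "walk r (a # w) = walk (nb r a) w" by (simp add: walk_def)
lemma walk_append[simp]: "walk r (u @ v) = walk (walk r u) v" by (simp add: walk_def)
lemma walk_snoc: "walk r (w @ [a]) = nb (walk r w) a" by simp

lemma walk_rev: "set w \<subseteq> \<Omega> \<Longrightarrow> walk (walk r w) (rev w) = r"
  by (induction w arbitrary: r) (auto simp: nb_back)

lemma red_Cons: "red (a # w) \<Longrightarrow> red w"
  by (auto simp: red_def successively_Cons)
lemma red_snoc: "red (w @ [a]) \<longleftrightarrow> red w \<and> a \<in> \<Omega> \<and> (w \<noteq> [] \<longrightarrow> last w \<noteq> a)"
  by (auto simp: red_def successively_append_iff)

definition verts :: "'v \<Rightarrow> 'c list \<Rightarrow> 'v list" where
  "verts r w = map (\<lambda>k. walk r (take k w)) [0..<Suc (length w)]"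

lemma red_verts: "red w \<Longrightarrow> reduced_walk adj (verts r w)"
  unfolding reduced_walk_def
proof (intro conjI allI impI)
  assume r: "red w"
  fix k assume k: "Suc k < length (verts r w)"
  then have k': "k < length w" by (simp add: verts_def)
  have "take (Suc k) w = take k w @ [w ! k]" using k' by (simp add: take_Suc_conv_app_nth)
  moreover have "w ! k \<in> \<Omega>" using r k' by (auto simp: red_def)
  ultimately show "adj (verts r w ! k) (verts r w ! Suc k)"
    using k' nb by (simp add: verts_def nth_append del: upt_Suc)
next
  assume r: "red w"
  fix k assume k: "Suc (Suc k) < length (verts r w)"
  then have k': "Suc k < length w" by (simp add: verts_def)
  have t1: "take (Suc k) w = take k w @ [w ! k]" using k' by (simp add: take_Suc_conv_app_nth)
  have t2: "take (Suc (Suc k)) w = take (Suc k) w @ [w ! Suc k]" using k' by (simp add: take_Suc_conv_app_nth)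
  have i1: "w ! k \<in> \<Omega>" "w ! Suc k \<in> \<Omega>" using r k' by (auto simp: red_def)
  have ne: "w ! k \<noteq> w ! Suc k" using r k' successively_nth by (auto simp: red_def)
  let ?y = "walk r (take (Suc k) w)"
  have "walk r (take k w) = nb ?y (w ! k)" using t1 nb_back[OF i1(1)] by simp
  moreover have "walk r (take (Suc (Suc k)) w) = nb ?y (w ! Suc k)" using t2 by simp
  ultimately have "walk r (take k w) \<noteq> walk r (take (Suc (Suc k)) w)"
    using nb_inj[OF i1] ne by metis
  then show "verts r w ! k \<noteq> verts r w ! Suc (Suc k)"
    using k' by (simp add: verts_def del: upt_Suc)
qed

lemma no_closed: "red u \<Longrightarrow> u \<noteq> [] \<Longrightarrow> walk x u = x \<Longrightarrow> False"
proof -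
  assume u: "red u" "u \<noteq> []" "walk x u = x"
  have len: "length (verts x u) = Suc (length u)" by (simp add: verts_def)
  have nth: "k \<le> length u \<Longrightarrow> verts x u ! k = walk x (take k u)" for k
    by (simp add: verts_def del: upt_Suc)
  have "length (verts x u) \<ge> 2" using len u(2) by (cases u) auto
  moreover have "hd (verts x u) = x"
  proof -
    have "verts x u \<noteq> []" using len by (metis Zero_not_Suc list.size(3))
    then show ?thesis using nth[of 0] by (simp add: hd_conv_nth)
  qed
  moreover have "last (verts x u) = x"
  proof -
    have "verts x u \<noteq> []" using len by (metis Zero_not_Suc list.size(3))
    then show ?thesis using len nth[of "length u"] u(3) by (simp add: last_conv_nth)
  qed
  ultimately show False using tree red_verts[OF u(1)] by metis
qed


lemma walk_inj: "red w1 \<Longrightarrow> red w2 \<Longrightarrow> walk r w1 = walk r w2 \<Longrightarrow> w1 = w2"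
proof (induction w1 arbitrary: r w2)
  case Nil
  then show ?case using no_closed[of w2 r] by (cases w2) auto
next
  case (Cons a w1)
  show ?case
  proof (cases w2)
    case Nil
    then show ?thesis using Cons.prems no_closed[of "a # w1" r] by simp
  next
    case (Cons b w2')
    show ?thesis
    proof (cases "a = b")
      case True
      then show ?thesis using Cons.IH[of w2' "nb r a"] Cons.prems \<open>w2 = b # w2'\<close> red_Cons by auto
    next
      case False
      let ?x = "walk r (a # w1)"
      let ?u = "rev (a # w1) @ (b # w2')"
      have s1: "set (a # w1) \<subseteq> \<Omega>" using Cons.prems(1) by (simp add: red_def)
      have "walk ?x ?u = walk r (b # w2')" using walk_rev[OF s1, of r] by simp
      also have "\<dots> = ?x" using Cons.prems \<open>w2 = b # w2'\<close> by simp
      finally have cl: "walk ?x ?u = ?x" .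
      have r1: "successively (\<noteq>) (rev (a # w1))" using Cons.prems(1) by (simp add: red_def del: rev.simps)
      have r2: "successively (\<noteq>) (b # w2')" "set (b # w2') \<subseteq> \<Omega>" using Cons.prems(2) \<open>w2 = b # w2'\<close> by (auto simp: red_def)
      have "red ?u" using r1 r2 s1 False unfolding red_def successively_append_iff by auto
      then show ?thesis using no_closed[OF _ _ cl] by simp
    qed
  qed
qed

lemma walk_surj: "\<exists>w. red w \<and> walk r w = x"
  using conn[of r x]
proof (induction rule: rtranclp_induct)
  case base
  then show ?case by (rule exI[of _ "[]"]) (simp add: red_def)
next
  case (step y z)
  then obtain w where w: "red w" "walk r w = y" by blast
  let ?a = "c y z"
  have a: "?a \<in> \<Omega>" "z = nb y ?a" using step(2) cOm nbr_eq by auto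
  show ?case
  proof (cases "w \<noteq> [] \<and> last w = ?a")
    case True
    then obtain bw where bw: "w = bw @ [?a]" by (metis append_butlast_last_id)
    have "red bw" using w(1) bw red_snoc by auto
    moreover have "walk r bw = z"
    proof -
      have "y = nb (walk r bw) ?a" using w(2) bw by simp
      then show ?thesis using a nb_back by metis
    qed
    ultimately show ?thesis by blast
  next
    case False
    then have "red (w @ [?a])" using w(1) a red_snoc by auto
    moreover have "walk r (w @ [?a]) = z" using w(2) a by simp
    ultimately show ?thesis by blast
  qed
qed

definition addr :: "'v \<Rightarrow> 'v \<Rightarrow> 'c list" where
  "addr r x = (THE w. red w \<and> walk r w = x)"

lemma addr: "red (addr r x) \<and> walk r (addr r x) = x"
proof -
  have "\<exists>!w. red w \<and> walk r w = x" using walk_surj walk_inj by metis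
  then show ?thesis unfolding addr_def by (rule theI')
qed

lemma addr_walk: "red w \<Longrightarrow> addr r (walk r w) = w"
  using addr walk_inj by metis

lemma addr_root: "addr r r = []"
  using addr_walk[of "[]" r] by (simp add: red_def)

lemma adj_addr: "adj x y \<longleftrightarrow> (\<exists>a. addr r y = addr r x @ [a]) \<or> (\<exists>a. addr r x = addr r y @ [a])"
proof
  assume xy: "adj x y"
  let ?w = "addr r x" let ?a = "c x y"
  have a: "?a \<in> \<Omega>" "y = nb x ?a" using xy cOm nbr_eq by auto
  have w: "red ?w" "walk r ?w = x" using addr by auto
  show "(\<exists>a. addr r y = addr r x @ [a]) \<or> (\<exists>a. addr r x = addr r y @ [a])"
  proof (cases "?w \<noteq> [] \<and> last ?w = ?a")
    case True
    then obtain bw where bw: "?w = bw @ [?a]" by (metis append_butlast_last_id)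
    have "red bw" using w(1) bw red_snoc by auto
    moreover have "walk r bw = y" using w(2) bw a nb_back by (metis walk_snoc)
    ultimately have "addr r y = bw" using addr_walk by metis
    then show ?thesis using bw by auto
  next
    case False
    then have "red (?w @ [?a])" using w(1) a red_snoc by auto
    moreover have "walk r (?w @ [?a]) = y" using w(2) a by simp
    ultimately have "addr r y = ?w @ [?a]" using addr_walk by metis
    then show ?thesis by auto
  qed
next
  have gen: "adj x y" if h: "addr r y = addr r x @ [a]" for x y a
  proof -
    have "red (addr r x @ [a])" using addr[of r y] h by simp
    then have "a \<in> \<Omega>" using red_snoc by auto
    moreover have "y = nb x a" using addr[of r y] addr[of r x] h by (metis walk_snoc)
    ultimately show ?thesis using nb by auto
  qed
  assume "(\<exists>a. addr r y = addr r x @ [a]) \<or> (\<exists>a. addr r x = addr r y @ [a])"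
  then show "adj x y" using gen sym_adj by blast
qed

definition tau :: "('c list \<Rightarrow> 'c \<Rightarrow> 'c) \<Rightarrow> 'c list \<Rightarrow> 'c list" where
  "tau \<pi> w = map (\<lambda>k. \<pi> (take k w) (w ! k)) [0..<length w]"

lemma tau_Nil[simp]: "tau \<pi> [] = []" by (simp add: tau_def)
lemma length_tau[simp]: "length (tau \<pi> w) = length w" by (simp add: tau_def)
lemma tau_snoc[simp]: "tau \<pi> (w @ [a]) = tau \<pi> w @ [\<pi> w a]"
  by (simp add: tau_def nth_append)

context
  fixes \<pi> :: "'c list \<Rightarrow> 'c \<Rightarrow> 'c"
  assumes PB: "\<And>w. red w \<Longrightarrow> bij_betw (\<pi> w) \<Omega> \<Omega>"
    and PC: "\<And>w a. red (w @ [a]) \<Longrightarrow> \<pi> (w @ [a]) a = \<pi> w a"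
begin

lemma tau_last: "red w \<Longrightarrow> w \<noteq> [] \<Longrightarrow> last (tau \<pi> w) = \<pi> w (last w)"
proof -
  assume "red w" "w \<noteq> []"
  then obtain bw a where bw: "w = bw @ [a]" by (metis append_butlast_last_id)
  then show ?thesis using PC \<open>red w\<close> by simp
qed

lemma red_tau: "red w \<Longrightarrow> red (tau \<pi> w)"
proof (induction w rule: rev_induct)
  case Nil
  then show ?case by (simp add: red_def)
next
  case (snoc a w)
  have rw: "red w" "a \<in> \<Omega>" "w \<noteq> [] \<longrightarrow> last w \<noteq> a" using snoc.prems red_snoc by auto
  have pa: "\<pi> w a \<in> \<Omega>" using PB[OF rw(1)] rw(2) bij_betw_apply by metis
  have "tau \<pi> w \<noteq> [] \<longrightarrow> last (tau \<pi> w) \<noteq> \<pi> w a"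
  proof
    assume "tau \<pi> w \<noteq> []"
    then have ne: "w \<noteq> []" by auto
    then have "last w \<in> \<Omega>" using rw(1) by (auto simp: red_def)
    then show "last (tau \<pi> w) \<noteq> \<pi> w a"
      using tau_last[OF rw(1) ne] PB[OF rw(1)] rw ne unfolding bij_betw_def inj_on_def by metis
  qed
  then show ?case using snoc.IH[OF rw(1)] pa red_snoc by simp
qed

lemma tau_inj: "red w1 \<Longrightarrow> red w2 \<Longrightarrow> tau \<pi> w1 = tau \<pi> w2 \<Longrightarrow> w1 = w2"
proof (induction w1 arbitrary: w2 rule: rev_induct)
  case Nil
  then show ?case by (metis length_0_conv length_tau)
next
  case (snoc a w1)
  have "w2 \<noteq> []" using snoc.prems(3) by (metis length_0_conv length_tau snoc_eq_iff_butlast)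
  then obtain w2' b where w2: "w2 = w2' @ [b]" by (metis append_butlast_last_id)
  have r: "red w1" "a \<in> \<Omega>" "red w2'" "b \<in> \<Omega>" using snoc.prems w2 red_snoc by auto
  have "tau \<pi> w1 = tau \<pi> w2'" "\<pi> w1 a = \<pi> w2' b" using snoc.prems(3) w2 by auto
  then have "w1 = w2'" using snoc.IH r by blast
  then have "a = b" using \<open>\<pi> w1 a = \<pi> w2' b\<close> PB[OF r(1)] r unfolding bij_betw_def inj_on_def by metis
  then show ?case using w2 \<open>w1 = w2'\<close> by simp
qed

lemma tau_surj: "red v \<Longrightarrow> \<exists>w. red w \<and> tau \<pi> w = v"
proof (induction v rule: rev_induct)
  case Nil
  then show ?case by (intro exI[of _ "[]"]) (simp add: red_def)
next
  case (snoc b v)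
  have rv: "red v" "b \<in> \<Omega>" "v \<noteq> [] \<longrightarrow> last v \<noteq> b" using snoc.prems red_snoc by auto
  obtain w where w: "red w" "tau \<pi> w = v" using snoc.IH rv by blast
  obtain a where a: "a \<in> \<Omega>" "\<pi> w a = b" using PB[OF w(1)] rv(2) unfolding bij_betw_def by force
  have "w \<noteq> [] \<longrightarrow> last w \<noteq> a"
  proof
    assume ne: "w \<noteq> []"
    show "last w \<noteq> a"
    proof
      assume "last w = a"
      then have "last v = b" using tau_last[OF w(1) ne] w a by simp
      moreover have "v \<noteq> []" using ne w(2) by (metis length_0_conv length_tau)
      ultimately show False using rv by simp
    qed
  qed
  then have "red (w @ [a])" using w a red_snoc by auto
  moreover have "tau \<pi> (w @ [a]) = v @ [b]" using w a by simp
  ultimately show ?case by blast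
qed

lemma tau_child: "red u \<Longrightarrow> red v \<Longrightarrow> (\<exists>a. v = u @ [a]) \<longleftrightarrow> (\<exists>b. tau \<pi> v = tau \<pi> u @ [b])"
proof
  assume "\<exists>a. v = u @ [a]" then show "\<exists>b. tau \<pi> v = tau \<pi> u @ [b]" by auto
next
  assume ru: "red u" and rv: "red v" and "\<exists>b. tau \<pi> v = tau \<pi> u @ [b]"
  then obtain b where b: "tau \<pi> v = tau \<pi> u @ [b]" by blast
  then have "v \<noteq> []" by (metis length_0_conv length_tau snoc_eq_iff_butlast)
  then obtain v' a where v: "v = v' @ [a]" by (metis append_butlast_last_id)
  have "red v'" using rv v red_snoc by auto
  moreover have "tau \<pi> v' = tau \<pi> u" using b v by simp
  ultimately have "v' = u" using tau_inj ru by blast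
  then show "\<exists>a. v = u @ [a]" using v by blast
qed

definition hmap :: "'v \<Rightarrow> 'v \<Rightarrow> 'v \<Rightarrow> 'v" where
  "hmap r r' x = walk r' (tau \<pi> (addr r x))"

lemma h_walk: "red w \<Longrightarrow> hmap r r' (walk r w) = walk r' (tau \<pi> w)"
  by (simp add: hmap_def addr_walk)

lemma addr_h: "addr r' (hmap r r' x) = tau \<pi> (addr r x)"
  unfolding hmap_def using addr_walk red_tau addr by blast

lemma h_root: "hmap r r' r = r'"
  by (simp add: hmap_def addr_root)

lemma h_Aut: "hmap r r' \<in> Aut adj"
  unfolding Aut_def
proof (intro CollectI conjI allI)
  show "bij (hmap r r')"
    unfolding bij_def
  proof
    show "inj (hmap r r')"
    proof (rule injI)
      fix x y assume "hmap r r' x = hmap r r' y"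
      then have "tau \<pi> (addr r x) = tau \<pi> (addr r y)" using addr_h by metis
      then have "addr r x = addr r y" using tau_inj addr by blast
      then show "x = y" using addr by metis
    qed
    show "surj (hmap r r')"
    proof -
      have "z \<in> range (hmap r r')" for z
      proof -
        obtain w where w: "red w" "tau \<pi> w = addr r' z" using tau_surj addr by blast
        have "hmap r r' (walk r w) = z" using h_walk[OF w(1)] w addr by simp
        then show ?thesis by blast
      qed
      then show ?thesis by blast
    qed
  qed
next
  fix x y
  show "adj x y \<longleftrightarrow> adj (hmap r r' x) (hmap r r' y)"
    using adj_addr[of x y r] adj_addr[of "hmap r r' x" "hmap r r' y" r'] addr_h
      tau_child[of "addr r x" "addr r y"] tau_child[of "addr r y" "addr r x"] addr
    by metis
qed

lemma h_local: assumes rw: "red w"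
  shows "local_perm \<Omega> adj c (hmap r r') (walk r w) = restrict (\<pi> w) \<Omega>"
proof (rule ext)
  fix a
  let ?x = "walk r w"
  show "local_perm \<Omega> adj c (hmap r r') ?x a = restrict (\<pi> w) \<Omega> a"
  proof (cases "a \<in> \<Omega>")
    case False
    then show ?thesis by (simp add: local_perm_def)
  next
    case a: True
    show ?thesis
    proof (cases "w \<noteq> [] \<and> last w = a")
      case True
      then obtain bw where bw: "w = bw @ [a]" by (metis append_butlast_last_id)
      have rbw: "red bw" using rw bw red_snoc by auto
      have e: "\<pi> bw a \<in> \<Omega>" using PB[OF rbw] a bij_betw_apply by metis
      have n1: "nb ?x a = walk r bw" using bw a nb_back by simp
      let ?z = "walk r' (tau \<pi> bw)"
      have h1: "hmap r r' (walk r bw) = ?z" using h_walk[OF rbw] .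
      have h2: "hmap r r' ?x = nb ?z (\<pi> bw a)" using h_walk[OF rw] bw by simp
      have "c (nb ?z (\<pi> bw a)) ?z = \<pi> bw a" using nb[OF e, of ?z] csym by metis
      moreover have "\<pi> w a = \<pi> bw a" using PC rw bw by simp
      ultimately show ?thesis using a n1 h1 h2 by (simp add: local_perm_def)
    next
      case False
      then have rwa: "red (w @ [a])" using rw a red_snoc by auto
      have e: "\<pi> w a \<in> \<Omega>" using PB[OF rw] a bij_betw_apply by metis
      have "hmap r r' (nb ?x a) = nb (hmap r r' ?x) (\<pi> w a)"
        using h_walk[OF rwa] h_walk[OF rw] by (metis tau_snoc walk_snoc)
      then show ?thesis using a nb[OF e] by (simp add: local_perm_def)
    qed
  qed
qed

end



lemma lp_Bij: assumes g: "g \<in> Aut adj" shows "local_perm \<Omega> adj c g v \<in> Bij \<Omega>"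
proof -
  let ?f = "\<lambda>a. c (g v) (g (nb v a))"
  have ad: "\<And>a. a \<in> \<Omega> \<Longrightarrow> adj (g v) (g (nb v a))" using g nb by (auto simp: Aut_def)
  have sub: "?f ` \<Omega> \<subseteq> \<Omega>" using ad cOm by auto
  have inj: "inj_on ?f \<Omega>"
  proof (rule inj_onI)
    fix a b assume ab: "a \<in> \<Omega>" "b \<in> \<Omega>" "?f a = ?f b"
    then have "g (nb v a) = g (nb v b)"
      using cbij[of "g v"] ad unfolding bij_betw_def inj_on_def by blast
    then have "nb v a = nb v b" using g by (auto simp: Aut_def bij_def inj_def)
    then show "a = b" using nb_inj ab by blast
  qed
  have "bij_betw ?f \<Omega> \<Omega>" using endo_inj_surj[OF finO sub inj] inj by (simp add: bij_betw_def)
  then have "bij_betw (local_perm \<Omega> adj c g v) \<Omega> \<Omega>"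
    unfolding local_perm_def by (rule bij_betw_cong[THEN iffD1, rotated]) simp
  then show ?thesis by (simp add: Bij_def local_perm_def)
qed

lemma lp_compat: assumes g: "g \<in> Aut adj" and rw: "red (w @ [a])"
  shows "local_perm \<Omega> adj c g (walk r (w @ [a])) a = local_perm \<Omega> adj c g (walk r w) a"
proof -
  have a: "a \<in> \<Omega>" using rw red_snoc by auto
  let ?x = "walk r w"
  have "adj ?x (nb ?x a)" using nb a by auto
  then have "adj (g ?x) (g (nb ?x a))" using g by (auto simp: Aut_def)
  then have "c (g (nb ?x a)) (g ?x) = c (g ?x) (g (nb ?x a))" using csym sym_adj by metis
  then show ?thesis using a nb_back by (simp add: local_perm_def)
qed

lemma lp_local: assumes "\<forall>y\<in>insert v (nb v ` \<Omega>). h y = g y"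
  shows "local_perm \<Omega> adj c h v = local_perm \<Omega> adj c g v"
  unfolding local_perm_def using assms by (intro restrict_ext) auto

lemma approx:
  assumes g: "g \<in> Aut adj" "\<forall>v. local_perm \<Omega> adj c g v \<in> F'"
    and FF': "F \<subseteq> F'" and Fhat: "F' \<subseteq> hat \<Omega> F" and one: "(\<lambda>x\<in>\<Omega>. x) \<in> F" and S: "finite S"
  shows "\<exists>h\<in>Aut adj. finite {v. local_perm \<Omega> adj c h v \<notin> F} \<and>
           (\<forall>v. local_perm \<Omega> adj c h v \<in> F') \<and> (\<forall>x\<in>S. h x = g x)"
proof -
  define r where "r = (undefined :: 'v)"
  define N where "N = Max (insert 0 (length ` addr r ` S))"
  have N: "\<forall>x\<in>S. length (addr r x) \<le> N" using S by (simp add: N_def)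
  let ?lp = "local_perm \<Omega> adj c g"
  define \<pi> where "\<pi> w = (if length w \<le> N then ?lp (walk r w)
      else (SOME f. f \<in> F \<and> f (w ! N) = ?lp (walk r (take N w)) (w ! N)))" for w
  have FB: "F' \<subseteq> Bij \<Omega>" using Fhat by (auto simp: hat_def)
  have ex: "\<exists>f. f \<in> F \<and> f (w ! N) = ?lp (walk r (take N w)) (w ! N)" if "red w" "N < length w" for w
  proof -
    let ?a = "w ! N" let ?p = "?lp (walk r (take N w))"
    have a: "?a \<in> \<Omega>" using that by (auto simp: red_def)
    have "?p \<in> hat \<Omega> F" using g(2) Fhat by blast
    moreover have "{f ?a | f. f \<in> F} \<in> orbits \<Omega> F" using a by (auto simp: orbits_def)
    ultimately have "?p ` {f ?a | f. f \<in> F} = {f ?a | f. f \<in> F}" by (simp add: hat_def)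
    moreover have "?a \<in> {f ?a | f. f \<in> F}"
      unfolding mem_Collect_eq by (rule exI[of _ "\<lambda>x\<in>\<Omega>. x"]) (use one a in simp)
    ultimately have "?p ?a \<in> {f ?a | f. f \<in> F}" by blast
    then show ?thesis by force
  qed
  have \<pi>big: "\<pi> w \<in> F \<and> \<pi> w (w ! N) = ?lp (walk r (take N w)) (w ! N)" if "red w" "N < length w" for w
    using someI_ex[OF ex[OF that]] that by (simp add: \<pi>_def)
  have \<pi>F': "\<pi> w \<in> F'" if "red w" for w
    using \<pi>big[OF that] g(2) FF' by (cases "length w \<le> N") (auto simp: \<pi>_def)
  have PB: "bij_betw (\<pi> w) \<Omega> \<Omega>" if "red w" for w
    using \<pi>F'[OF that] FB by (auto simp: Bij_def)
  have PC: "\<pi> (w @ [a]) a = \<pi> w a" if rw: "red (w @ [a])" for w a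
  proof -
    have rw': "red w" using rw red_snoc by auto
    consider "length w < N" | "length w = N" | "length w > N" by linarith
    then show ?thesis
    proof cases
      case 1 then show ?thesis using lp_compat[OF g(1) rw] by (simp add: \<pi>_def)
    next
      case 2 then show ?thesis using \<pi>big[OF rw] by (simp add: \<pi>_def nth_append)
    next
      case 3
      then have "take N (w @ [a]) = take N w" "(w @ [a]) ! N = w ! N" by (auto simp: nth_append)
      then show ?thesis using 3 by (simp add: \<pi>_def)
    qed
  qed
  define h where "h = hmap \<pi> r (g r)"
  have hA: "h \<in> Aut adj" unfolding h_def by (rule h_Aut[of \<pi>, OF PB PC])
  have hl: "local_perm \<Omega> adj c h (walk r w) = \<pi> w" if "red w" for w
    using h_local[of \<pi>, OF PB PC that] \<pi>F'[OF that] FB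
    by (auto simp: h_def Bij_def extensional_restrict)
  have agree: "red w \<Longrightarrow> length w \<le> N \<Longrightarrow> walk (g r) (tau \<pi> w) = g (walk r w)" for w
  proof (induction w rule: rev_induct)
    case Nil then show ?case by simp
  next
    case (snoc a w)
    have rw: "red w" "a \<in> \<Omega>" using snoc.prems red_snoc by auto
    let ?x = "walk r w"
    have IH: "walk (g r) (tau \<pi> w) = g ?x" using snoc rw by simp
    have pw: "\<pi> w = ?lp ?x" using snoc.prems by (simp add: \<pi>_def)
    have "adj ?x (nb ?x a)" using nb rw by auto
    then have ad: "adj (g ?x) (g (nb ?x a))" using g by (auto simp: Aut_def)
    have "walk (g r) (tau \<pi> (w @ [a])) = nb (g ?x) (c (g ?x) (g (nb ?x a)))"
      using IH pw rw by (simp add: local_perm_def)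
    also have "\<dots> = g (nb ?x a)" using nbr_eq[OF ad] .
    finally show ?case by simp
  qed
  have "{v. local_perm \<Omega> adj c h v \<notin> F} \<subseteq> walk r ` {w. set w \<subseteq> \<Omega> \<and> length w \<le> N}"
  proof
    fix v assume v: "v \<in> {v. local_perm \<Omega> adj c h v \<notin> F}"
    let ?w = "addr r v"
    have w: "red ?w" "walk r ?w = v" using addr by auto
    have "length ?w \<le> N"
    proof (rule ccontr)
      assume "\<not> length ?w \<le> N"
      then have "\<pi> ?w \<in> F" using \<pi>big w by simp
      then show False using v hl[OF w(1)] w by simp
    qed
    then show "v \<in> walk r ` {w. set w \<subseteq> \<Omega> \<and> length w \<le> N}" using w by (force simp: red_def)
  qed
  then have fin: "finite {v. local_perm \<Omega> adj c h v \<notin> F}"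
    using finite_lists_length_le[OF finO] finite_subset by blast
  have inF': "\<forall>v. local_perm \<Omega> adj c h v \<in> F'"
    using hl addr \<pi>F' by metis
  have "\<forall>x\<in>S. h x = g x"
  proof
    fix x assume x: "x \<in> S"
    let ?w = "addr r x"
    have w: "red ?w" "walk r ?w = x" using addr by auto
    have "h x = walk (g r) (tau \<pi> ?w)" using h_walk[of \<pi>, OF PB PC w(1), of r "g r"] w(2) by (simp add: h_def)
    also have "\<dots> = g x" using agree w N x by simp
    finally show "h x = g x" .
  qed
  then show ?thesis using hA fin inF' by blast
qed

lemma closure_G2:
  assumes FF': "F \<subseteq> F'" and Fhat: "F' \<subseteq> hat \<Omega> F" and one: "(\<lambda>x\<in>\<Omega>. x) \<in> F"
  shows "perm_topology adj closure_of (G2_grp \<Omega> adj c F F') = U_grp \<Omega> adj c F'"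
proof (intro equalityI subsetI)
  fix x assume x: "x \<in> perm_topology adj closure_of (G2_grp \<Omega> adj c F F')"
  then have xA: "x \<in> Aut adj" using topspace_perm in_closure_of by metis
  show "x \<in> U_grp \<Omega> adj c F'"
  proof (rule ccontr)
    assume "x \<notin> U_grp \<Omega> adj c F'"
    then obtain v where v: "local_perm \<Omega> adj c x v \<notin> F'" using xA by (auto simp: U_grp_def)
    define Sv where "Sv = insert v (nb v ` \<Omega>)"
    define T where "T = {h \<in> Aut adj. \<forall>y\<in>Sv. h y = x y}"
    have fS: "finite Sv" using finO by (simp add: Sv_def)
    have "perm_open adj T" unfolding perm_open_def
    proof (intro conjI ballI)
      show "T \<subseteq> Aut adj" by (auto simp: T_def)
      fix g assume "g \<in> T"
      then show "\<exists>S. finite S \<and> {h \<in> Aut adj. \<forall>x\<in>S. h x = g x} \<subseteq> T"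
        using fS by (intro exI[of _ Sv]) (auto simp: T_def)
    qed
    then have "openin (perm_topology adj) T" by (simp add: openin_perm)
    moreover have "x \<in> T" using xA by (simp add: T_def)
    ultimately obtain y where y: "y \<in> G2_grp \<Omega> adj c F F'" "y \<in> T" using x in_closure_of by metis
    then have "local_perm \<Omega> adj c y v = local_perm \<Omega> adj c x v"
      by (intro lp_local) (auto simp: T_def Sv_def)
    moreover have "local_perm \<Omega> adj c y v \<in> F'" using y by (auto simp: G2_grp_def U_grp_def)
    ultimately show False using v by simp
  qed
next
  fix g assume g: "g \<in> U_grp \<Omega> adj c F'"
  then have gA: "g \<in> Aut adj" "\<forall>v. local_perm \<Omega> adj c g v \<in> F'" by (auto simp: U_grp_def)
  show "g \<in> perm_topology adj closure_of (G2_grp \<Omega> adj c F F')"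
    unfolding in_closure_of topspace_perm openin_perm
  proof (intro conjI allI impI gA)
    fix T assume T: "g \<in> T \<and> perm_open adj T"
    then obtain S where S: "finite S" "{h \<in> Aut adj. \<forall>x\<in>S. h x = g x} \<subseteq> T"
      unfolding perm_open_def by blast
    obtain h where h: "h \<in> Aut adj" "finite {v. local_perm \<Omega> adj c h v \<notin> F}"
        "\<forall>v. local_perm \<Omega> adj c h v \<in> F'" "\<forall>x\<in>S. h x = g x"
      using approx[OF gA FF' Fhat one S(1)] by blast
    then have "h \<in> G2_grp \<Omega> adj c F F'" by (simp add: G2_grp_def G_grp_def U_grp_def)
    moreover have "h \<in> T" using h S by blast
    ultimately show "\<exists>y. y \<in> G2_grp \<Omega> adj c F F' \<and> y \<in> T" by blast
  qed
qed


lemma dense_iff: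
  assumes sg: "subgroup F (BijGroup \<Omega>)"
  shows "perm_topology adj closure_of (G_grp \<Omega> adj c F) = Aut adj \<longleftrightarrow> transitive_on \<Omega> F"
proof
  have FB: "F \<subseteq> Bij \<Omega>" using subgroup.subset[OF sg] by (simp add: BijGroup_def)
  assume dense: "perm_topology adj closure_of (G_grp \<Omega> adj c F) = Aut adj"
  show "transitive_on \<Omega> F" unfolding transitive_on_def
  proof (intro ballI)
    fix a b assume a: "a \<in> \<Omega>" and b: "b \<in> \<Omega>"
    show "\<exists>f\<in>F. f a = b"
    proof (rule ccontr)
      assume nab: "\<not> (\<exists>f\<in>F. f a = b)"
      define sw where "sw x = (if x = a then b else if x = b then a else x)" for x
      have swB: "bij_betw sw \<Omega> \<Omega>"
      proof -
        have s: "sw ` \<Omega> \<subseteq> \<Omega>" using a b by (auto simp: sw_def)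
        have i: "inj_on sw \<Omega>" by (auto simp: sw_def inj_on_def split: if_splits)
        show ?thesis using endo_inj_surj[OF finO s i] i by (simp add: bij_betw_def)
      qed
      define r where "r = (undefined :: 'v)"
      define \<alpha> where "\<alpha> = hmap (\<lambda>w. sw) r r"
      have PB: "bij_betw ((\<lambda>w. sw) w) \<Omega> \<Omega>" if "red w" for w using swB by simp
      have PC: "(\<lambda>w. sw) (w @ [x]) x = (\<lambda>w. sw) w x" if "red (w @ [x])" for w x by simp
      have \<alpha>A: "\<alpha> \<in> Aut adj" unfolding \<alpha>_def by (rule h_Aut[of "\<lambda>w. sw", OF PB PC])
      have \<alpha>r: "\<alpha> r = r" unfolding \<alpha>_def by (rule h_root[of "\<lambda>w. sw", OF PB PC])
      have r0: "red []" by (simp add: red_def)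
      have "local_perm \<Omega> adj c \<alpha> (walk r []) = restrict sw \<Omega>"
        unfolding \<alpha>_def using h_local[of "\<lambda>w. sw", OF PB PC r0] by simp
      then have "local_perm \<Omega> adj c \<alpha> r a = b" using a by (simp add: sw_def)
      then have cb: "c r (\<alpha> (nb r a)) = b" using a \<alpha>r by (simp add: local_perm_def)
      let ?u = "nb r a"
      define T where "T = {h \<in> Aut adj. \<forall>y\<in>{r, ?u}. h y = \<alpha> y}"
      have "perm_open adj T" unfolding perm_open_def
      proof (intro conjI ballI)
        show "T \<subseteq> Aut adj" by (auto simp: T_def)
        fix g assume "g \<in> T"
        then show "\<exists>S. finite S \<and> {h \<in> Aut adj. \<forall>x\<in>S. h x = g x} \<subseteq> T"
          by (intro exI[of _ "{r, ?u}"]) (auto simp: T_def)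
      qed
      moreover have "\<alpha> \<in> T" using \<alpha>A by (simp add: T_def)
      ultimately obtain g where g: "g \<in> G_grp \<Omega> adj c F" "g \<in> T"
        using \<alpha>A dense[symmetric] in_closure_of openin_perm by metis
      have gA: "g \<in> Aut adj" and gfin: "finite {v. local_perm \<Omega> adj c g v \<notin> F}"
        using g by (auto simp: G_grp_def)
      define bad where "bad x y \<longleftrightarrow> \<not> (\<exists>f\<in>F. f (c x y) = c (g x) (g y))" for x y
      have gadj: "adj (g x) (g y)" if "adj x y" for x y using gA that by (auto simp: Aut_def)
      have bad_v: "local_perm \<Omega> adj c g y \<notin> F" if "adj x y" "bad x y" for x y
      proof
        assume inF: "local_perm \<Omega> adj c g y \<in> F"
        have yx: "adj y x" using that sym_adj by blast
        have "local_perm \<Omega> adj c g y (c y x) = c (g y) (g x)"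
          using cOm[OF yx] nbr_eq[OF yx] by (simp add: local_perm_def)
        then show False using inF that csym gadj unfolding bad_def by metis
      qed
      have step: "\<exists>z. adj y z \<and> z \<noteq> x \<and> bad y z" if xy: "adj x y" "bad x y" for x y
      proof -
        have yx: "adj y x" using xy sym_adj by blast
        let ?\<sigma> = "local_perm \<Omega> adj c g y"
        let ?a0 = "c y x"
        have a0: "?a0 \<in> \<Omega>" using cOm[OF yx] .
        have s0: "?\<sigma> ?a0 = c (g y) (g x)"
          using a0 nbr_eq[OF yx] by (simp add: local_perm_def)
        have "\<not> (\<exists>f\<in>F. f ?a0 = ?\<sigma> ?a0)"
          using xy s0 csym gadj unfolding bad_def by metis
        then obtain e where e: "e \<in> \<Omega>" "e \<noteq> ?a0" "\<not> (\<exists>f\<in>F. f e = ?\<sigma> e)"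
          using orb_count[OF sg finO lp_Bij[OF gA] a0] by blast
        let ?z = "nb y e"
        have z: "adj y ?z" "c y ?z = e" using nb[OF e(1)] by auto
        have "?z \<noteq> x" using e(2) z(2) by auto
        moreover have "bad y ?z" using e(1,3) z by (simp add: bad_def local_perm_def)
        ultimately show ?thesis using z by blast
      qed
      define nx where "nx x y = (SOME z. adj y z \<and> z \<noteq> x \<and> bad y z)" for x y
      have nx: "adj y (nx x y) \<and> nx x y \<noteq> x \<and> bad y (nx x y)" if "adj x y" "bad x y" for x y
        unfolding nx_def using someI_ex[OF step[OF that]] .
      have ru: "adj r ?u" "c r ?u = a" using nb[OF a] by auto
      have bru: "bad r ?u" using nab ru g(2) \<alpha>r cb by (auto simp: bad_def T_def)
      define P where "P n = pseq nx r ?u n" for n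
      have inv: "adj (fst (P n)) (snd (P n)) \<and> bad (fst (P n)) (snd (P n))" for n
        by (induction n) (use ru bru nx in \<open>auto simp: P_def\<close>)
      define X where "X n = fst (P (Suc n))" for n
      have XS: "X (Suc n) = snd (P (Suc n))" for n by (simp add: X_def P_def)
      show False
      proof (rule no_cycle_seq[OF tree, of X])
        fix n
        show "adj (X n) (X (Suc n))" using inv[of "Suc n"] XS by (simp add: X_def)
        have "X (Suc (Suc n)) = nx (X n) (X (Suc n))" by (simp add: X_def P_def)
        then show "X (Suc (Suc n)) \<noteq> X n" using nx inv[of "Suc n"] XS X_def by metis
      next
        have "range X \<subseteq> {v. local_perm \<Omega> adj c g v \<notin> F}"
        proof
          fix v assume "v \<in> range X"
          then obtain n where "v = X n" by blast
          then have "v = snd (P n)" by (simp add: X_def P_def)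
          then show "v \<in> {v. local_perm \<Omega> adj c g v \<notin> F}" using inv[of n] bad_v by blast
        qed
        then show "finite (range X)" using gfin finite_subset by blast
      qed
    qed
  qed
next
  have FB: "F \<subseteq> Bij \<Omega>" using subgroup.subset[OF sg] by (simp add: BijGroup_def)
  have one: "(\<lambda>x\<in>\<Omega>. x) \<in> F" using subgroup.one_closed[OF sg] by (simp add: BijGroup_def)
  assume tr: "transitive_on \<Omega> F"
  have hat: "Bij \<Omega> \<subseteq> hat \<Omega> F"
  proof
    fix p assume p: "p \<in> Bij \<Omega>"
    have "Orb = \<Omega>" if Ob: "Orb \<in> orbits \<Omega> F" for Orb
    proof -
      obtain a where a: "a \<in> \<Omega>" "Orb = {f a | f. f \<in> F}" using Ob unfolding orbits_def by blast
      show ?thesis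
      proof (intro equalityI subsetI)
        fix y assume "y \<in> Orb"
        then obtain f where "f \<in> F" "y = f a" using a by blast
        then show "y \<in> \<Omega>" using orb_sub[OF sg] a by blast
      next
        fix y assume "y \<in> \<Omega>"
        then obtain f where "f \<in> F" "f a = y" using tr a unfolding transitive_on_def by blast
        then show "y \<in> Orb" using a by blast
      qed
    qed
    then show "p \<in> hat \<Omega> F" using p by (auto simp: hat_def Bij_def bij_betw_def)
  qed
  have "G2_grp \<Omega> adj c F (Bij \<Omega>) = G_grp \<Omega> adj c F"
    using lp_Bij by (auto simp: G2_grp_def G_grp_def U_grp_def)
  moreover have "U_grp \<Omega> adj c (Bij \<Omega>) = Aut adj"
    using lp_Bij by (auto simp: U_grp_def)
  ultimately show "perm_topology adj closure_of (G_grp \<Omega> adj c F) = Aut adj"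
    using closure_G2[OF FB hat one] by simp
qed

end

theorem mainTheorem14:
  fixes \<Omega> :: "'c set" and d :: nat
    and adj :: "'v \<Rightarrow> 'v \<Rightarrow> bool" and c :: "'v \<Rightarrow> 'v \<Rightarrow> 'c"
    and F F' :: "('c \<Rightarrow> 'c) set"
  assumes "colored_regular_tree \<Omega> d adj c"
    and "d \<ge> 3"
    and "subgroup F (BijGroup \<Omega>)"
    and "subgroup F' (BijGroup \<Omega>)"
    and "F \<subseteq> F'"
    and "F' \<subseteq> hat \<Omega> F"
  shows "perm_topology adj closure_of (G2_grp \<Omega> adj c F F') = U_grp \<Omega> adj c F'
         \<and> (perm_topology adj closure_of (G_grp \<Omega> adj c F) = Aut adj
              \<longleftrightarrow> transitive_on \<Omega> F)"
proof -
  interpret crt \<Omega> d adj c by unfold_locales (rule assms(1))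
  have one: "(\<lambda>x\<in>\<Omega>. x) \<in> F" using subgroup.one_closed[OF assms(3)] by (simp add: BijGroup_def)
  show ?thesis using closure_G2[OF assms(5,6) one] dense_iff[OF assms(3)] by blast
qed

end
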